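(* Let $T>0$, $\tau>0$ and $x\in L^\infty(-\tau,T)$. For $t\in[0,T]$ let $x_t(s)=x(t-s)$, $s\in[0,\tau]$, and for $k>0$ let $\mathrm{LIE}_k(x_t)=\frac1k\log\big(\int_{t-\tau}^t\exp(k\,x(s))\,\mathrm{d}s\big)$. Then for every $p\in[1,\infty)$, \[ \int_0^T\big|\operatorname*{ess\,sup}x_t-\mathrm{LIE}_k(x_t)\big|^p\,\mathrm{d}t\to0\qquad\text{as }k\to\infty, \] where $\operatorname*{ess\,sup}x_t$ is the essential supremum of $x_t$ over $[0,\tau]$. *)

theory Defs
  imports "HOL-Probability.Probability"
begin

definition hist :: "(real \<Rightarrow> real) \<Rightarrow> real \<Rightarrow> real \<Rightarrow> real" where
  "hist x t = (\<lambda>s. x (t - s))"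

definition esssup_hist :: "real \<Rightarrow> (real \<Rightarrow> real) \<Rightarrow> real \<Rightarrow> ereal" where
  "esssup_hist tau x t = esssup (restrict_space lebesgue {0..tau}) (\<lambda>s. ereal (hist x t s))"

definition LIE :: "real \<Rightarrow> real \<Rightarrow> (real \<Rightarrow> real) \<Rightarrow> real \<Rightarrow> real" where
  "LIE k tau x t = (1 / k) * ln (LINT s:{t - tau..t}|lebesgue. exp (k * x s))"

end

theory Submission imports Defs begin

lemma core:
  fixes N :: "real measure" and y :: "real \<Rightarrow> real" and C L :: real
  assumes fm: "finite_measure N" and ym: "y \<in> borel_measurable N"
    and bd: "AE s in N. \<bar>y s\<bar> \<le> C" and L: "measure N (space N) = L" "L > 0"
  defines "E \<equiv> real_of_ereal (esssup N (\<lambda>s. ereal (y s)))"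
  shows "((\<lambda>k. (1/k) * ln (integral\<^sup>L N (\<lambda>s. exp (k * y s)))) \<longlongrightarrow> E) at_top"
    and "\<And>k. k \<ge> 1 \<Longrightarrow> \<bar>E - (1/k) * ln (integral\<^sup>L N (\<lambda>s. exp (k * y s)))\<bar> \<le> 2*\<bar>C\<bar> + \<bar>ln L\<bar>"
proof -
  interpret finite_measure N by (rule fm)
  have em: "(\<lambda>s. ereal (y s)) \<in> borel_measurable N" using ym by measurable
  have sp: "emeasure N (space N) \<noteq> 0" using L emeasure_eq_measure by auto
  have bd': "AE s in N. \<bar>y s\<bar> \<le> \<bar>C\<bar>" using bd by eventually_elim auto
  have Eup: "esssup N (\<lambda>s. ereal (y s)) \<le> ereal \<bar>C\<bar>"
    using em bd' by (intro esssup_I) (auto elim!: eventually_mono)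
  have "esssup N (\<lambda>s. ereal (- \<bar>C\<bar>)) \<le> esssup N (\<lambda>s. ereal (y s))"
    using bd' by (intro esssup_AE_mono) (auto elim!: eventually_mono)
  then have Elow: "ereal (- \<bar>C\<bar>) \<le> esssup N (\<lambda>s. ereal (y s))"
    using esssup_const[OF sp] by metis
  have Eeq: "esssup N (\<lambda>s. ereal (y s)) = ereal E"
    unfolding E_def using Eup Elow by (cases "esssup N (\<lambda>s. ereal (y s))") auto
  have EC: "- \<bar>C\<bar> \<le> E" "E \<le> \<bar>C\<bar>" using Eup Elow Eeq by auto
  have AEle: "AE s in N. y s \<le> E"
    using esssup_AE[of "\<lambda>s. ereal (y s)" N] unfolding Eeq by (auto elim!: eventually_mono)
  have int: "integrable N (\<lambda>s. exp (k * y s))" for k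
  proof (rule integrable_const_bound[where B="exp (\<bar>k\<bar> * \<bar>C\<bar>)"])
    show "AE s in N. norm (exp (k * y s)) \<le> exp (\<bar>k\<bar> * \<bar>C\<bar>)"
      using bd'
    proof eventually_elim
      case (elim s)
      have "k * y s \<le> \<bar>k\<bar> * \<bar>C\<bar>"
        by (metis abs_ge_self abs_mult elim mult_left_mono abs_ge_zero order_trans)
      then show ?case by simp
    qed
  qed (use ym in measurable)
  define I where "I k = integral\<^sup>L N (\<lambda>s. exp (k * y s))" for k
  have Iup: "I k \<le> L * exp (k * E)" if "k > 0" for k
  proof -
    have "I k \<le> integral\<^sup>L N (\<lambda>s. exp (k * E))"
      unfolding I_def using AEle \<open>k>0\<close>
      by (intro integral_mono_AE int) (auto elim!: eventually_mono)
    then show ?thesis using L by simp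
  qed
  have Ilow: "I k \<ge> L * exp (- k * \<bar>C\<bar>)" if "k > 0" for k
  proof -
    have "integral\<^sup>L N (\<lambda>s. exp (- k * \<bar>C\<bar>)) \<le> I k"
      unfolding I_def
    proof (intro integral_mono_AE int)
      show "AE s in N. exp (- k * \<bar>C\<bar>) \<le> exp (k * y s)"
        using bd'
      proof eventually_elim
        case (elim s)
        then have "- \<bar>C\<bar> \<le> y s" by simp
        then have "k * (- \<bar>C\<bar>) \<le> k * y s" using \<open>k>0\<close> by (intro mult_left_mono) auto
        then show ?case by simp
      qed
    qed auto
    then show ?thesis using L by simp
  qed
  have Ipos: "I k > 0" if "k > 0" for k
    using Ilow[OF that] L by (smt (verit) exp_gt_zero mult_pos_pos)
  have LIEup: "(1/k) * ln (I k) \<le> E + ln L / k" if "k > 0" for k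
  proof -
    have "ln (I k) \<le> ln (L * exp (k * E))" using Iup[OF that] Ipos[OF that] by simp
    also have "\<dots> = ln L + k * E" using L by (simp add: ln_mult)
    finally show ?thesis using that by (simp add: field_simps)
  qed
  have LIElow: "(1/k) * ln (I k) \<ge> - \<bar>C\<bar> + ln L / k" if "k > 0" for k
  proof -
    have "ln (I k) \<ge> ln (L * exp (- k * \<bar>C\<bar>))" using Ilow[OF that] L by (intro ln_mono) auto
    moreover have "ln (L * exp (- k * \<bar>C\<bar>)) = ln L - k * \<bar>C\<bar>" using L by (simp add: ln_mult)
    ultimately have "ln L - k * \<bar>C\<bar> \<le> ln (I k)" by simp
    then have "(ln L - k * \<bar>C\<bar>) / k \<le> ln (I k) / k"
      by (rule divide_right_mono) (use that in auto)
    moreover have "(ln L - k * \<bar>C\<bar>) / k = - \<bar>C\<bar> + ln L / k" using that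
      by (simp add: diff_divide_distrib)
    ultimately show ?thesis by simp
  qed
  show "\<And>k. k \<ge> 1 \<Longrightarrow> \<bar>E - (1/k) * ln (integral\<^sup>L N (\<lambda>s. exp (k * y s)))\<bar> \<le> 2*\<bar>C\<bar> + \<bar>ln L\<bar>"
  proof -
    fix k :: real assume k: "k \<ge> 1"
    have "\<bar>ln L\<bar> / k \<le> \<bar>ln L\<bar> / 1" by (rule divide_left_mono) (use k in auto)
    have k0: "k > 0" using k by simp
    then have lk: "\<bar>ln L / k\<bar> \<le> \<bar>ln L\<bar>" using \<open>\<bar>ln L\<bar> / k \<le> \<bar>ln L\<bar> / 1\<close> by (simp add: abs_div)
    have u: "1/k * ln (I k) \<le> E + ln L / k" by (rule LIEup[OF k0])
    have l: "- \<bar>C\<bar> + ln L / k \<le> 1/k * ln (I k)" by (rule LIElow[OF k0])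
    have "\<bar>E - 1/k * ln (I k)\<bar> \<le> 2*\<bar>C\<bar> + \<bar>ln L\<bar>"
    proof (rule abs_leI)
      show "E - 1/k * ln (I k) \<le> 2*\<bar>C\<bar> + \<bar>ln L\<bar>" using l EC lk abs_ge_self[of "ln L / k"] abs_ge_minus_self[of "ln L / k"] by linarith
      show "- (E - 1/k * ln (I k)) \<le> 2*\<bar>C\<bar> + \<bar>ln L\<bar>" using u EC lk abs_ge_self[of "ln L / k"] by linarith
    qed
    then show "\<bar>E - (1/k) * ln (integral\<^sup>L N (\<lambda>s. exp (k * y s)))\<bar> \<le> 2*\<bar>C\<bar> + \<bar>ln L\<bar>"
      by (simp only: I_def)
  qed
  have LIEdelta: "\<exists>m>0. \<forall>k>0. (1/k) * ln (I k) \<ge> E - d + ln m / k" if "d > 0" for d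
  proof -
    define A where "A = {s \<in> space N. ereal (E - d) < ereal (y s)}"
    have "emeasure N A > 0" unfolding A_def
      by (rule esssup_pos_measure[OF em]) (use Eeq that in auto)
    moreover have Am: "A \<in> sets N" unfolding A_def using ym by measurable
    ultimately have m: "measure N A > 0" using emeasure_eq_measure by auto
    show ?thesis
    proof (intro exI[of _ "measure N A"] conjI allI impI m)
      fix k :: real assume k: "k > 0"
      have "integral\<^sup>L N (\<lambda>s. indicator A s * exp (k * (E - d))) \<le> I k"
        unfolding I_def
      proof (intro integral_mono int)
        show "integrable N (\<lambda>s. indicator A s * exp (k * (E - d)))"
        proof (rule integrable_const_bound[where B="exp (k * (E - d))"])
          show "AE s in N. norm (indicator A s * exp (k * (E - d))) \<le> exp (k * (E - d))"
            by (auto simp: indicator_def)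
          note Am[measurable]
          show "(\<lambda>s. indicator A s * exp (k * (E - d))) \<in> borel_measurable N" by measurable
        qed
        fix s assume "s \<in> space N"
        show "indicator A s * exp (k * (E - d)) \<le> exp (k * y s)"
          using k by (auto simp: A_def indicator_def)
      qed
      then have "measure N A * exp (k * (E - d)) \<le> I k"
        using Am by (simp add: Int_absorb2 sets.sets_into_space)
      then have "ln (measure N A * exp (k * (E - d))) \<le> ln (I k)" using m by (intro ln_mono) auto
      then have "ln (measure N A) + k * (E - d) \<le> ln (I k)" using m by (simp add: ln_mult)
      then have "(ln (measure N A) + k * (E - d)) / k \<le> ln (I k) / k"
        by (rule divide_right_mono) (use k in auto)
      moreover have "(ln (measure N A) + k * (E - d)) / k = E - d + ln (measure N A) / k"
        using k by (simp add: add_divide_distrib)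
      ultimately show "(1/k) * ln (I k) \<ge> E - d + ln (measure N A) / k" by simp
    qed
  qed
  show "((\<lambda>k. (1/k) * ln (integral\<^sup>L N (\<lambda>s. exp (k * y s)))) \<longlongrightarrow> E) at_top"
    unfolding I_def[symmetric]
  proof (rule tendstoI)
    fix e :: real assume e: "e > 0"
    obtain m where m: "m > 0" "\<And>k. k > 0 \<Longrightarrow> (1/k) * ln (I k) \<ge> E - e/2 + ln m / k"
      using LIEdelta[of "e/2"] e by auto
    define K where "K = 2 * (\<bar>ln L\<bar> + \<bar>ln m\<bar>) / e + 1"
    have K: "K > 0" unfolding K_def using e by (auto intro!: add_nonneg_pos)
    show "\<forall>\<^sub>F k in at_top. dist ((1/k) * ln (I k)) E < e"
      unfolding eventually_at_top_linorder
    proof (intro exI[of _ K] allI impI)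
      fix k assume k: "k \<ge> K"
      then have k0: "k > 0" using K by auto
      have "2 * (\<bar>ln L\<bar> + \<bar>ln m\<bar>) / e < k" using k unfolding K_def by auto
      then have "2 * (\<bar>ln L\<bar> + \<bar>ln m\<bar>) < k * e" using e by (simp add: field_simps)
      then have h: "(\<bar>ln L\<bar> + \<bar>ln m\<bar>) / k < e / 2" using k0 by (simp add: field_simps)
      have a1: "ln L / k \<le> (\<bar>ln L\<bar> + \<bar>ln m\<bar>) / k"
        by (rule divide_right_mono) (use k0 in auto)
      have "(- ln m) / k \<le> (\<bar>ln L\<bar> + \<bar>ln m\<bar>) / k"
        by (rule divide_right_mono) (use k0 in auto)
      then have a2: "- (ln m / k) \<le> (\<bar>ln L\<bar> + \<bar>ln m\<bar>) / k" by simp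
      have u: "1/k * ln (I k) \<le> E + ln L / k" by (rule LIEup[OF k0])
      have l: "E - e/2 + ln m / k \<le> 1/k * ln (I k)" by (rule m(2)[OF k0])
      show "dist ((1/k) * ln (I k)) E < e"
        unfolding dist_real_def abs_less_iff
        using u l a1 a2 h e by linarith
    qed
  qed
qed


lemma AE_reflect:
  fixes P :: "real \<Rightarrow> bool" and t :: real
  assumes "AE u in lebesgue. P u"
  shows "AE s in lebesgue. P (t - s)"
proof -
  obtain N0 where N0: "{u \<in> space lebesgue. \<not> P u} \<subseteq> N0" "emeasure lebesgue N0 = 0" "N0 \<in> sets lebesgue"
    using assms by (rule AE_E)
  have aff: "(\<lambda>s::real. t + (-1) * s) \<in> lebesgue \<rightarrow>\<^sub>M lebesgue"
    using lebesgue_affine_measurable[where c="\<lambda>x::real. -1" and t=t] by simp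
  define S where "S = (\<lambda>s::real. t + (-1) * s) -` N0"
  have S: "S \<in> sets lebesgue"
    using measurable_sets[OF aff N0(3)] unfolding S_def by simp
  have "emeasure lebesgue N0 = (\<integral>\<^sup>+u. indicator N0 u \<partial>lebesgue)"
    using N0(3) by simp
  also have "\<dots> = ennreal \<bar>-1\<bar> * (\<integral>\<^sup>+s. indicator N0 (t + (-1) * s) \<partial>lebesgue)"
    by (rule nn_integral_real_affine_lebesgue) (use N0(3) in auto)
  also have "\<dots> = (\<integral>\<^sup>+s. indicator S s \<partial>lebesgue)"
    unfolding S_def by (simp add: indicator_def)
  also have "\<dots> = emeasure lebesgue S" using S by simp
  finally have "S \<in> null_sets lebesgue" using N0(2) S by auto
  then show ?thesis
    by (rule AE_I') (use N0(1) in \<open>auto simp: S_def\<close>)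
qed

lemma per_t:
  fixes T tau t C :: real and x :: "real \<Rightarrow> real"
  assumes tau: "tau > 0" and t: "t \<in> {0..T}"
    and xm: "set_borel_measurable lebesgue {-tau<..<T} x"
    and C: "AE s in lebesgue. s \<in> {-tau<..<T} \<longrightarrow> \<bar>x s\<bar> \<le> C"
  shows "((\<lambda>k. LIE k tau x t) \<longlongrightarrow> real_of_ereal (esssup_hist tau x t)) at_top"
    and "\<And>k. k \<ge> 1 \<Longrightarrow> \<bar>real_of_ereal (esssup_hist tau x t) - LIE k tau x t\<bar> \<le> 2*\<bar>C\<bar> + \<bar>ln tau\<bar>"
proof -
  define N where "N = restrict_space lebesgue {0..tau}"
  define y where "y s = x (t - s)" for s
  have sp: "space N = {0..tau}" unfolding N_def by (simp add: space_restrict_space)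
  have fm: "finite_measure N"
    by (rule finite_measureI) (use tau in \<open>simp add: N_def space_restrict_space emeasure_restrict_space\<close>)
  have L: "measure N (space N) = tau" unfolding sp N_def
    by (subst measure_restrict_space) (use tau in auto)
  define g where "g u = indicator {t-tau..t} u * x u" for u
  have g0: "(\<lambda>u. indicator {t-tau..t} u * (indicator {-tau<..<T} u *\<^sub>R x u)) \<in> borel_measurable lebesgue"
  proof -
    have xm': "(\<lambda>u. indicator {-tau<..<T} u *\<^sub>R x u) \<in> borel_measurable lebesgue"
      using xm unfolding set_borel_measurable_def .
    have im: "indicat_real {t - tau..t} \<in> borel_measurable lebesgue"
      by (rule borel_measurable_indicator) simp
    show ?thesis using xm' im by (intro borel_measurable_times) auto
  qed
  have gm: "g \<in> borel_measurable lebesgue"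
  proof (rule measurable_discrete_difference[OF g0, of "{-tau, T}"])
    fix u assume "u \<notin> {-tau, T}"
    then show "indicator {t-tau..t} u * (indicator {-tau<..<T} u *\<^sub>R x u) = g u"
      using t by (auto simp: g_def indicator_def)
  qed auto
  have "(\<lambda>s. g (t + (-1) *\<^sub>R s)) \<in> borel_measurable lebesgue"
    by (rule borel_measurable_affine[OF gm]) simp
  moreover have "(\<lambda>s. g (t + (-1) *\<^sub>R s)) = (\<lambda>s. indicator {0..tau} s *\<^sub>R y s)"
    by (auto simp: g_def y_def indicator_def fun_eq_iff)
  ultimately have ym: "y \<in> borel_measurable N"
    unfolding N_def by (subst borel_measurable_restrict_space_iff) auto
  have "AE s in lebesgue. (t - s) \<in> {-tau<..<T} \<longrightarrow> \<bar>x (t - s)\<bar> \<le> C"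
    by (rule AE_reflect[OF C])
  moreover have "AE s in lebesgue. s \<notin> {0, tau}"
    by (rule AE_discrete_difference) auto
  ultimately have "AE s in lebesgue. s \<in> {0..tau} \<longrightarrow> \<bar>y s\<bar> \<le> C"
    by eventually_elim (use t in \<open>auto simp: y_def\<close>)
  then have bd: "AE s in N. \<bar>y s\<bar> \<le> C"
    unfolding N_def by (subst AE_restrict_space_iff) auto
  have ess: "esssup_hist tau x t = esssup N (\<lambda>s. ereal (y s))"
    unfolding esssup_hist_def hist_def N_def y_def ..
  have lie: "LIE k tau x t = (1/k) * ln (integral\<^sup>L N (\<lambda>s. exp (k * y s)))" for k
  proof -
    have "(LINT s:{t - tau..t}|lebesgue. exp (k * x s))
        = integral\<^sup>L lebesgue (\<lambda>u. indicator {t-tau..t} u *\<^sub>R exp (k * x u))"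
      unfolding set_lebesgue_integral_def ..
    also have "\<dots> = \<bar>-1\<bar> *\<^sub>R integral\<^sup>L lebesgue (\<lambda>s. indicator {t-tau..t} (t + (-1) * s) *\<^sub>R exp (k * x (t + (-1) * s)))"
      by (rule lebesgue_integral_real_affine) simp
    also have "\<dots> = integral\<^sup>L lebesgue (\<lambda>s. indicator {0..tau} s *\<^sub>R exp (k * y s))"
      by (auto simp: y_def indicator_def intro!: Bochner_Integration.integral_cong)
    also have "\<dots> = integral\<^sup>L N (\<lambda>s. exp (k * y s))"
      unfolding N_def by (subst integral_restrict_space) auto
    finally show ?thesis unfolding LIE_def by simp
  qed
  show "((\<lambda>k. LIE k tau x t) \<longlongrightarrow> real_of_ereal (esssup_hist tau x t)) at_top"
    unfolding lie ess by (rule core(1)[OF fm ym bd L tau])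
  show "\<And>k. k \<ge> 1 \<Longrightarrow> \<bar>real_of_ereal (esssup_hist tau x t) - LIE k tau x t\<bar> \<le> 2*\<bar>C\<bar> + \<bar>ln tau\<bar>"
    unfolding lie ess by (rule core(2)[OF fm ym bd L tau])
qed


theorem lemma4p4:
  fixes T tau p :: real and x :: "real \<Rightarrow> real"
  assumes "T > 0" and "tau > 0"
    and "set_borel_measurable lebesgue {-tau<..<T} x"
    and "\<exists>C. AE s in lebesgue. s \<in> {-tau<..<T} \<longrightarrow> \<bar>x s\<bar> \<le> C"
    and "1 \<le> p"
  shows "((\<lambda>k. LINT t:{0..T}|lebesgue.
            \<bar>real_of_ereal (esssup_hist tau x t) - LIE k tau x t\<bar> powr p) \<longlongrightarrow> 0) at_top"
proof -
  obtain C where C: "AE s in lebesgue. s \<in> {-tau<..<T} \<longrightarrow> \<bar>x s\<bar> \<le> C"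
    using assms(4) by auto
  define f where "f k t = \<bar>real_of_ereal (esssup_hist tau x t) - LIE k tau x t\<bar> powr p" for k t
  define B where "B = (2*\<bar>C\<bar> + \<bar>ln tau\<bar>) powr p"
  have B0: "B \<ge> 0" unfolding B_def by simp
  have pt: "((\<lambda>k. f k t) \<longlongrightarrow> 0) at_top" if t: "t \<in> {0..T}" for t
    unfolding f_def
  proof (rule tendsto_zero_powrI)
    have "((\<lambda>k. real_of_ereal (esssup_hist tau x t) - LIE k tau x t) \<longlongrightarrow>
        real_of_ereal (esssup_hist tau x t) - real_of_ereal (esssup_hist tau x t)) at_top"
      by (intro tendsto_diff tendsto_const per_t(1)[OF assms(2) t assms(3) C])
    then show "((\<lambda>k. \<bar>real_of_ereal (esssup_hist tau x t) - LIE k tau x t\<bar>) \<longlongrightarrow> 0) at_top"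
      by (intro tendsto_rabs_zero) simp
  qed (use assms(5) in auto)
  have bnd: "\<bar>f k t\<bar> \<le> B" if t: "t \<in> {0..T}" and k: "k \<ge> 1" for t k
  proof -
    have "\<bar>real_of_ereal (esssup_hist tau x t) - LIE k tau x t\<bar> \<le> 2*\<bar>C\<bar> + \<bar>ln tau\<bar>"
      by (rule per_t(2)[OF assms(2) t assms(3) C k])
    then have "f k t \<le> B" unfolding f_def B_def
      by (intro powr_mono2) (use assms(5) in auto)
    then show ?thesis unfolding f_def by simp
  qed
  define F where "F k t = indicator {0..T} t *\<^sub>R f k t" for k t
  have Fz: "F k t = 0" if "t \<notin> {0..T}" for k t using that by (simp add: F_def)
  have "((\<lambda>k. integral\<^sup>L lebesgue (F k)) \<longlongrightarrow> 0) at_top"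
  proof (rule tendsto_at_topI_sequentially)
    fix X :: "nat \<Rightarrow> real" assume X: "filterlim X at_top sequentially"
    have ev1: "eventually (\<lambda>n. X n \<ge> 1) sequentially"
      using X by (simp add: filterlim_at_top)
    define G where "G n = (if integrable lebesgue (F (X n)) \<and> X n \<ge> 1 then F (X n) else (\<lambda>_. 0))" for n
    define w where "w t = B * indicator {0..T} t" for t :: real
      have m1: "(\<lambda>_::real. 0::real) \<in> borel_measurable lebesgue" by simp
      have m2: "G n \<in> borel_measurable lebesgue" for n
        unfolding G_def by (auto intro: borel_measurable_integrable)
      have wi: "integrable lebesgue w"
        unfolding w_def by (intro integrable_mult_right integrable_real_indicator) (use assms(1) in auto)
      have lim: "AE t in lebesgue. (\<lambda>n. G n t) \<longlonglongrightarrow> 0"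
      proof (rule AE_I2)
        fix t
        show "(\<lambda>n. G n t) \<longlonglongrightarrow> 0"
        proof (cases "t \<in> {0..T}")
          case True
          have "(\<lambda>n. f (X n) t) \<longlonglongrightarrow> 0"
            by (rule filterlim_compose[OF pt[OF True] X])
          then have lim: "(\<lambda>n. \<bar>f (X n) t\<bar>) \<longlonglongrightarrow> 0" by (rule tendsto_rabs_zero)
          show ?thesis
            by (rule Lim_null_comparison[OF _ lim]) (use True in \<open>auto simp: G_def F_def\<close>)
        next
          case False
          then have "G n t = 0" for n by (simp add: G_def Fz)
          then show ?thesis by simp
        qed
      qed
      have bd: "AE t in lebesgue. norm (G n t) \<le> w t" for n
      proof (rule AE_I2)
        fix t
        show "norm (G n t) \<le> w t"
          using bnd[of t "X n"] B0 by (auto simp: G_def F_def w_def indicator_def)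
      qed
      have "(\<lambda>n. integral\<^sup>L lebesgue (G n)) \<longlonglongrightarrow> integral\<^sup>L lebesgue (\<lambda>_::real. 0::real)"
        by (rule integral_dominated_convergence[OF m1 m2 wi lim bd])
    then have "(\<lambda>n. integral\<^sup>L lebesgue (G n)) \<longlonglongrightarrow> 0" by simp
    then show "(\<lambda>n. integral\<^sup>L lebesgue (F (X n))) \<longlonglongrightarrow> 0"
    proof (rule Lim_transform_eventually)
      show "eventually (\<lambda>n. integral\<^sup>L lebesgue (G n) = integral\<^sup>L lebesgue (F (X n))) sequentially"
        using ev1 by eventually_elim (auto simp: G_def not_integrable_integral_eq)
    qed
  qed
  then show ?thesis
    unfolding set_lebesgue_integral_def F_def f_def .
qed

end
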